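(* Let $n\ge 1$ and let $G$ be a finite group of permutations of $[2n]=\{1,\dots,2n\}$ acting on the circuit $\Delta_{2n}$ (i.e. $G$ is a group of automorphisms of the cycle graph $\Delta_{2n}=(1\,2\,\dots\,2n)$). Then the number of equivalence classes of $n$-diagrams under the action of $G$ equals \[ \frac{1}{|S_n \wr S_2| \cdot |G|} \sum_{\pi \in S_n \wr S_2} \sum_{\eta \in G} \; \prod_i i^{\pi_i} \: \eta_i \: (\eta_i - 1) \: \cdots \: (\eta_i - \pi_i + 1), \] where $\pi$ has cycle type $1^{\pi_1}2^{\pi_2}\cdots(2n)^{\pi_{2n}}$ as a permutation of $[n]\times[2]$, $\eta$ has cycle type $1^{\eta_1}2^{\eta_2}\cdots(2n)^{\eta_{2n}}$ as a permutation of $[2n]$, the product is taken over all $i\in[2n]$ with $\pi_i>0$, and the product is understood to be $0$ if $\pi_i>\eta_i$ for some $i$.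
   Context: A chord diagram of order $n$ (an $n$-diagram) is a 3-regular graph on vertex set $[2n]$ containing the $2n$-circuit $\Delta_{2n}=(1\,2\,\dots\,2n)$ as a subgraph; the edges of $\Delta_{2n}$ form the circle, the remaining edges are the chords (so the chords form a perfect matching of $[2n]$). Given a group $G$ acting on $\Delta_{2n}$, two $n$-diagrams $\Gamma_1,\Gamma_2$ are equivalent if there is $g\in G$ taking the chords of $\Gamma_1$ to the chords of $\Gamma_2$. The wreath product $S_n\wr S_2$ consists of pairs $(\tau,\bar\sigma)$ with $\tau\in S_n$, $\bar\sigma=(\sigma_1,\dots,\sigma_n)\in S_2^n$, acting on $[n]\times[2]$ by $(\tau,\bar\sigma)\cdot(i,j)=(\tau(i),\sigma_i(j))$; it has order $2^n n!$. *)

theory Defs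
  imports Complex_Main "HOL-Combinatorics.Permutations" "HOL-Combinatorics.Orbits"
begin

definition circ_adj :: "nat \<Rightarrow> nat \<Rightarrow> nat \<Rightarrow> bool" where
  "circ_adj n i j \<longleftrightarrow> i \<in> {1..2*n} \<and> j \<in> {1..2*n} \<and>
     (j = i mod (2*n) + 1 \<or> i = j mod (2*n) + 1)"

definition circuit_perm_group :: "nat \<Rightarrow> (nat \<Rightarrow> nat) set \<Rightarrow> bool" where
  "circuit_perm_group n G \<longleftrightarrow>
     G \<noteq> {} \<and> finite G \<and>
     (\<forall>g\<in>G. g permutes {1..2*n}) \<and>
     (\<forall>g\<in>G. \<forall>h\<in>G. g \<circ> h \<in> G) \<and>
     (\<forall>g\<in>G. inv g \<in> G) \<and>
     (\<forall>g\<in>G. \<forall>i j. circ_adj n i j \<longleftrightarrow> circ_adj n (g i) (g j))"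

definition chord_diagram :: "nat \<Rightarrow> nat set set \<Rightarrow> bool" where
  "chord_diagram n M \<longleftrightarrow>
     (\<forall>e\<in>M. e \<subseteq> {1..2*n} \<and> card e = 2) \<and>
     (\<forall>x\<in>{1..2*n}. \<exists>!e. e \<in> M \<and> x \<in> e)"

definition diagram_equiv :: "nat \<Rightarrow> (nat \<Rightarrow> nat) set \<Rightarrow> (nat set set \<times> nat set set) set" where
  "diagram_equiv n G = {(M1, M2). chord_diagram n M1 \<and> chord_diagram n M2 \<and>
       (\<exists>g\<in>G. (\<lambda>e. g ` e) ` M1 = M2)}"

definition wreath :: "nat \<Rightarrow> (nat \<times> nat \<Rightarrow> nat \<times> nat) set" where
  "wreath n = {p. \<exists>\<tau> \<sigma>. \<tau> permutes {1..n} \<and> (\<forall>i\<in>{1..n}. \<sigma> i permutes {1..2}) \<and>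
      p = (\<lambda>(i,j). if (i,j) \<in> {1..n} \<times> {1..2} then (\<tau> i, \<sigma> i j) else (i,j))}"

definition cyc_count :: "('a \<Rightarrow> 'a) \<Rightarrow> 'a set \<Rightarrow> nat \<Rightarrow> nat" where
  "cyc_count p A k = card {C. \<exists>x\<in>A. C = orbit p x \<and> card C = k}"

definition falling :: "nat \<Rightarrow> nat \<Rightarrow> real" where
  "falling m r = (\<Prod>k<r. real m - real k)"

end

theory Submission
  imports Defs "HOL-Algebra.Group_Action"
begin


lemma funpow_in_set:
  assumes "bij_betw p A A" "x \<in> A" shows "(p ^^ j) x \<in> A"
  using assms by (induct j) (auto dest: bij_betwE)

lemma bij_self_in_orbit:
  assumes "finite A" "bij_betw p A A" "x \<in> A"
  shows "x \<in> Orbits.orbit p x" and "Orbits.orbit p x \<subseteq> A"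
proof -
  define p' where "p' = (\<lambda>z. if z \<in> A then p z else z)"
  have b: "bij_betw p' A A" using assms(2) unfolding p'_def
    by (rule bij_betw_cong[THEN iffD1, rotated]) auto
  have pp: "p' permutes A" by (rule bij_imp_permutes[OF b]) (simp add: p'_def)
  have perm: "permutation p'" using pp assms(1) permutation_permutes by blast
  have eq: "Orbits.orbit p' x = Orbits.orbit p x"
    apply (rule orbit_cong0[OF assms(3)])
    using pp permutes_in_image apply fastforce
    by (simp add: p'_def)
  show "x \<in> Orbits.orbit p x" using permutation_self_in_orbit[OF perm] eq by auto
  show "Orbits.orbit p x \<subseteq> A" using permutes_orbit_subset[OF pp assms(3)] eq by auto
qed

lemma orbit_facts:
  assumes "finite A" "bij_betw p A A" "x \<in> A"
  defines "k \<equiv> card (Orbits.orbit p x)"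
  shows "0 < k" "(p ^^ k) x = x" "Orbits.orbit p x = (\<lambda>j. (p ^^ j) x) ` {0..<k}"
    "inj_on (\<lambda>j. (p ^^ j) x) {0..<k}" "finite (Orbits.orbit p x)"
proof -
  have s: "x \<in> Orbits.orbit p x" using bij_self_in_orbit[OF assms(1-3)] by auto
  have e: "Orbits.orbit p x = (\<lambda>j. (p ^^ j) x) ` {0..<funpow_dist1 p x x}"
    by (rule orbit_conv_funpow_dist1[OF s])
  have i: "inj_on (\<lambda>j. (p ^^ j) x) {0..<funpow_dist1 p x x}"
    by (rule inj_on_funpow_dist1[OF s])
  have kk: "k = funpow_dist1 p x x" unfolding k_def e using card_image[OF i] by simp
  show "0 < k" using kk by simp
  show "(p ^^ k) x = x" using kk funpow_dist1_prop[OF s] by simp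
  show "Orbits.orbit p x = (\<lambda>j. (p ^^ j) x) ` {0..<k}" using e kk by simp
  show "inj_on (\<lambda>j. (p ^^ j) x) {0..<k}" using i kk by simp
  show "finite (Orbits.orbit p x)" using e by simp
qed

lemma orbit_eq_of_mem:
  assumes "finite A" "bij_betw p A A" "x \<in> A" "y \<in> Orbits.orbit p x"
  shows "Orbits.orbit p y = Orbits.orbit p x"
proof -
  have s: "x \<in> Orbits.orbit p x" using bij_self_in_orbit[OF assms(1-3)] by auto
  have xy: "x \<in> Orbits.orbit p y" by (rule orbit_swap[OF s assms(4)])
  show ?thesis
  proof
    show "Orbits.orbit p y \<subseteq> Orbits.orbit p x"
    proof
      fix z assume "z \<in> Orbits.orbit p y" then show "z \<in> Orbits.orbit p x" by (rule Orbits.orbit_trans[OF _ assms(4)])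
    qed
    show "Orbits.orbit p x \<subseteq> Orbits.orbit p y"
    proof
      fix z assume "z \<in> Orbits.orbit p x" then show "z \<in> Orbits.orbit p y" by (rule Orbits.orbit_trans[OF _ xy])
    qed
  qed
qed

lemma orbit_image:
  assumes "finite A" "bij_betw p A A" "x \<in> A"
  shows "p ` Orbits.orbit p x = Orbits.orbit p x"
proof (rule endo_inj_surj)
  show "finite (Orbits.orbit p x)" using orbit_facts[OF assms] by simp
  show "p ` Orbits.orbit p x \<subseteq> Orbits.orbit p x" by (auto intro: Orbits.orbit.step)
  show "inj_on p (Orbits.orbit p x)" using bij_self_in_orbit(2)[OF assms] assms(2)
    unfolding bij_betw_def using inj_on_subset by blast
qed

lemma bij_diff_orbit:
  assumes "finite A" "bij_betw p A A" "x \<in> A"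
  shows "bij_betw p (A - Orbits.orbit p x) (A - Orbits.orbit p x)"
proof (rule bij_betw_DiffI[OF assms(2)])
  show "bij_betw p (Orbits.orbit p x) (Orbits.orbit p x)"
    by (rule bij_betw_subset[OF assms(2) bij_self_in_orbit(2)[OF assms] orbit_image[OF assms]])
  show "Orbits.orbit p x \<subseteq> A" using bij_self_in_orbit(2)[OF assms] by simp
  then show "Orbits.orbit p x \<subseteq> A" .
qed

lemma cyc_diff:
  assumes "finite A" "bij_betw p A A" "x \<in> A"
  shows "cyc_count p (A - Orbits.orbit p x) i = cyc_count p A i - (if i = card (Orbits.orbit p x) then 1 else 0)"
    and "cyc_count p A (card (Orbits.orbit p x)) \<ge> 1"
proof -
  let ?C = "Orbits.orbit p x"
  define S where "S = {C. \<exists>x\<in>A. C = Orbits.orbit p x \<and> card C = i}"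
  have finS: "finite S" 
  proof (rule finite_subset[of _ "Pow A"])
    show "S \<subseteq> Pow A" unfolding S_def using bij_self_in_orbit(2)[OF assms(1,2)] by auto
  qed (use assms(1) in simp)
  have eq: "{C. \<exists>x\<in>A - ?C. C = Orbits.orbit p x \<and> card C = i} = S - {?C}"
  proof (intro Set.set_eqI iffI)
    fix D assume "D \<in> {C. \<exists>x\<in>A - ?C. C = Orbits.orbit p x \<and> card C = i}"
    then obtain z where z: "z \<in> A" "z \<notin> ?C" "D = Orbits.orbit p z" "card D = i" by auto
    have "z \<in> Orbits.orbit p z" using bij_self_in_orbit(1)[OF assms(1,2) z(1)] .
    then have "D \<noteq> ?C" using z by auto
    then show "D \<in> S - {?C}" unfolding S_def using z by auto
  next
    fix D assume "D \<in> S - {?C}"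
    then obtain z where z: "z \<in> A" "D = Orbits.orbit p z" "card D = i" "D \<noteq> ?C" unfolding S_def by auto
    have "z \<notin> ?C" using orbit_eq_of_mem[OF assms, of z] z by auto
    then show "D \<in> {C. \<exists>x\<in>A - ?C. C = Orbits.orbit p x \<and> card C = i}" using z by auto
  qed
  show "cyc_count p (A - Orbits.orbit p x) i = cyc_count p A i - (if i = card (Orbits.orbit p x) then 1 else 0)"
  proof (cases "i = card ?C")
    case True
    then have "?C \<in> S" unfolding S_def using assms(3) by auto
    then have "card (S - {?C}) = card S - 1" using finS by simp
    then show ?thesis unfolding cyc_count_def eq S_def[symmetric] using True by simp
  next
    case False
    then have "?C \<notin> S" unfolding S_def by auto
    then have "S - {?C} = S" by simp
    then show ?thesis unfolding cyc_count_def eq S_def[symmetric] using False by simp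
  qed
  show "cyc_count p A (card (Orbits.orbit p x)) \<ge> 1"
  proof -
    define T where "T = {C. \<exists>x\<in>A. C = Orbits.orbit p x \<and> card C = card ?C}"
    have "?C \<in> T" unfolding T_def using assms(3) by auto
    moreover have "finite T"
    proof (rule finite_subset[of _ "Pow A"])
      show "T \<subseteq> Pow A" unfolding T_def using bij_self_in_orbit(2)[OF assms(1,2)] by auto
    qed (use assms(1) in simp)
    ultimately have "card T > 0" using card_gt_0_iff by blast
    then show ?thesis unfolding cyc_count_def T_def[symmetric] by simp
  qed
qed

lemma card_k_points:
  assumes "finite B" "bij_betw q B B"
  shows "card {y\<in>B. card (Orbits.orbit q y) = k} = k * cyc_count q B k"
proof -
  define S where "S = {C. \<exists>x\<in>B. C = Orbits.orbit q x \<and> card C = k}"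
  have finS: "finite S" 
  proof (rule finite_subset[of _ "Pow B"])
    show "S \<subseteq> Pow B" unfolding S_def using bij_self_in_orbit(2)[OF assms] by auto
  qed (use assms(1) in simp)
  have U: "{y\<in>B. card (Orbits.orbit q y) = k} = \<Union>S"
  proof (intro Set.set_eqI iffI)
    fix y assume "y \<in> {y\<in>B. card (Orbits.orbit q y) = k}"
    then have y: "y \<in> B" "card (Orbits.orbit q y) = k" by auto
    then have "Orbits.orbit q y \<in> S" unfolding S_def by auto
    moreover have "y \<in> Orbits.orbit q y" using bij_self_in_orbit(1)[OF assms y(1)] .
    ultimately show "y \<in> \<Union>S" by blast
  next
    fix y assume "y \<in> \<Union>S"
    then obtain x where x: "x \<in> B" "y \<in> Orbits.orbit q x" "card (Orbits.orbit q x) = k" unfolding S_def by auto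
    have "y \<in> B" using x bij_self_in_orbit(2)[OF assms x(1)] by auto
    moreover have "Orbits.orbit q y = Orbits.orbit q x" using orbit_eq_of_mem[OF assms x(1,2)] .
    ultimately show "y \<in> {y\<in>B. card (Orbits.orbit q y) = k}" using x by auto
  qed
  have "card (\<Union>S) = sum card S"
  proof (rule card_Union_disjoint)
    show "pairwise disjnt S"
    proof (rule pairwiseI)
      fix X Y assume XY: "X \<in> S" "Y \<in> S" "X \<noteq> Y"
      obtain x1 where h1: "x1 \<in> B" "X = Orbits.orbit q x1" using XY(1) unfolding S_def by auto
      obtain x2 where h2: "x2 \<in> B" "Y = Orbits.orbit q x2" using XY(2) unfolding S_def by auto
      show "disjnt X Y" unfolding disjnt_def
      proof (rule ccontr)
        assume "X \<inter> Y \<noteq> {}"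
        then obtain z where z: "z \<in> Orbits.orbit q x1" "z \<in> Orbits.orbit q x2" using h1 h2 by auto
        have "Orbits.orbit q z = Orbits.orbit q x1" using orbit_eq_of_mem[OF assms h1(1) z(1)] .
        moreover have "Orbits.orbit q z = Orbits.orbit q x2" using orbit_eq_of_mem[OF assms h2(1) z(2)] .
        ultimately show False using XY(3) h1 h2 by simp
      qed
    qed
    show "\<And>A. A \<in> S \<Longrightarrow> finite A" unfolding S_def using orbit_facts(5)[OF assms] by auto
  qed
  also have "\<dots> = (\<Sum>C\<in>S. k)" unfolding S_def by (rule sum.cong) auto
  also have "\<dots> = k * card S" by simp
  finally have "card (\<Union>S) = k * card S" .
  then show ?thesis unfolding U cyc_count_def S_def .
qed


definition conj_set :: "('a \<Rightarrow> 'a) \<Rightarrow> 'a set \<Rightarrow> ('b \<Rightarrow> 'b) \<Rightarrow> 'b set \<Rightarrow> ('a \<Rightarrow> 'b) set" where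
  "conj_set p A q B = {f \<in> A \<rightarrow>\<^sub>E B. bij_betw f A B \<and> (\<forall>x\<in>A. q (f x) = f (p x))}"

lemma finite_conj_set: "finite A \<Longrightarrow> finite B \<Longrightarrow> finite (conj_set p A q B)"
  unfolding conj_set_def by (rule finite_subset[of _ "A \<rightarrow>\<^sub>E B"]) (auto intro: finite_PiE)

lemma conj_funpow:
  assumes "f \<in> conj_set p A q B" "bij_betw p A A" "x \<in> A"
  shows "f ((p ^^ j) x) = (q ^^ j) (f x)"
proof (induct j)
  case 0 then show ?case by simp
next
  case (Suc j)
  have "(p ^^ j) x \<in> A" by (rule funpow_in_set[OF assms(2,3)])
  then have "q (f ((p ^^ j) x)) = f (p ((p ^^ j) x))" using assms(1) unfolding conj_set_def by auto
  then show ?case using Suc by simp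
qed

lemma conj_orbit_image:
  assumes "f \<in> conj_set p A q B" "bij_betw p A A" "x \<in> A"
  shows "f ` Orbits.orbit p x = Orbits.orbit q (f x)"
proof -
  have "f ` Orbits.orbit p x = f ` {(p ^^ n) x | n. 0 < n}" by (simp add: orbit_altdef)
  also have "\<dots> = {f ((p ^^ n) x) | n. 0 < n}" by auto
  also have "\<dots> = {(q ^^ n) (f x) | n. 0 < n}" using conj_funpow[OF assms] by simp
  also have "\<dots> = Orbits.orbit q (f x)" by (simp add: orbit_altdef)
  finally show ?thesis .
qed

lemma conj_forward:
  assumes fin: "finite A" "finite B" and p: "bij_betw p A A" and q: "bij_betw q B B" and x0: "x0 \<in> A"
    and f: "f \<in> conj_set p A q B"
  shows "f x0 \<in> B" "card (Orbits.orbit q (f x0)) = card (Orbits.orbit p x0)"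
    "restrict f (A - Orbits.orbit p x0) \<in> conj_set p (A - Orbits.orbit p x0) q (B - Orbits.orbit q (f x0))"
proof -
  let ?C = "Orbits.orbit p x0" and ?D = "Orbits.orbit q (f x0)"
  have fb: "bij_betw f A B" and fP: "f \<in> A \<rightarrow>\<^sub>E B" and fc: "\<forall>x\<in>A. q (f x) = f (p x)"
    using f unfolding conj_set_def by auto
  show "f x0 \<in> B" using fP x0 by auto
  have CA: "?C \<subseteq> A" using bij_self_in_orbit(2)[OF fin(1) p x0] .
  have im: "f ` ?C = ?D" by (rule conj_orbit_image[OF f p x0])
  have injC: "inj_on f ?C" using fb CA unfolding bij_betw_def using inj_on_subset by blast
  show "card ?D = card ?C" using card_image[OF injC] im by simp
  have bC: "bij_betw f ?C ?D" using injC im unfolding bij_betw_def by simp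
  have DB: "?D \<subseteq> B" using im CA fb unfolding bij_betw_def by auto
  have bd: "bij_betw f (A - ?C) (B - ?D)" by (rule bij_betw_DiffI[OF fb bC CA DB])
  have pd: "bij_betw p (A - ?C) (A - ?C)" by (rule bij_diff_orbit[OF fin(1) p x0])
  show "restrict f (A - ?C) \<in> conj_set p (A - ?C) q (B - ?D)"
    unfolding conj_set_def
  proof (intro CollectI conjI ballI)
    show "restrict f (A - ?C) \<in> (A - ?C) \<rightarrow>\<^sub>E (B - ?D)" using bd unfolding bij_betw_def by auto
    show "bij_betw (restrict f (A - ?C)) (A - ?C) (B - ?D)" using bd
      by (rule bij_betw_cong[THEN iffD1, rotated]) simp
    fix x assume x: "x \<in> A - ?C"
    have "p x \<in> A - ?C" using pd x by (auto dest: bij_betwE)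
    then show "q (restrict f (A - ?C) x) = restrict f (A - ?C) (p x)" using x fc by auto
  qed
qed

lemma conj_inj:
  assumes fin: "finite A" "finite B" and p: "bij_betw p A A" and x0: "x0 \<in> A"
    and f1: "f1 \<in> conj_set p A q B" and f2: "f2 \<in> conj_set p A q B"
    and e1: "f1 x0 = f2 x0" and e2: "restrict f1 (A - Orbits.orbit p x0) = restrict f2 (A - Orbits.orbit p x0)"
  shows "f1 = f2"
proof
  fix z
  show "f1 z = f2 z"
  proof (cases "z \<in> Orbits.orbit p x0")
    case True
    then obtain j where j: "z = (p ^^ j) x0" using orbit_facts(3)[OF fin(1) p x0] by auto
    show ?thesis using conj_funpow[OF f1 p x0, of j] conj_funpow[OF f2 p x0, of j] e1 j by simp
  next
    case False
    show ?thesis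
    proof (cases "z \<in> A")
      case True
      then show ?thesis using False fun_cong[OF e2, of z] by simp
    next
      case False
      then show ?thesis using f1 f2 unfolding conj_set_def by (auto simp: PiE_def extensional_def)
    qed
  qed
qed

lemma conj_extend:
  assumes fin: "finite A" "finite B" and p: "bij_betw p A A" and q: "bij_betw q B B" and x0: "x0 \<in> A"
    and y: "y \<in> B" "card (Orbits.orbit q y) = card (Orbits.orbit p x0)"
    and g: "g \<in> conj_set p (A - Orbits.orbit p x0) q (B - Orbits.orbit q y)"
  shows "\<exists>f\<in>conj_set p A q B. f x0 = y \<and> restrict f (A - Orbits.orbit p x0) = g"
proof -
  define C where "C = Orbits.orbit p x0"
  define D where "D = Orbits.orbit q y"
  define k where "k = card C"
  have Cfacts: "0 < k" "(p ^^ k) x0 = x0" "C = (\<lambda>j. (p ^^ j) x0) ` {0..<k}"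
    "inj_on (\<lambda>j. (p ^^ j) x0) {0..<k}"
    using orbit_facts[OF fin(1) p x0] unfolding C_def k_def by auto
  have kD: "k = card D" using y(2) unfolding D_def k_def C_def by simp
  have Dfacts: "(q ^^ k) y = y" "D = (\<lambda>j. (q ^^ j) y) ` {0..<k}"
    using orbit_facts[OF fin(2) q y(1)] unfolding D_def kD by auto
  have CA: "C \<subseteq> A" using bij_self_in_orbit(2)[OF fin(1) p x0] unfolding C_def .
  have DB: "D \<subseteq> B" using bij_self_in_orbit(2)[OF fin(2) q y(1)] unfolding D_def .
  have x0C: "x0 \<in> C" using bij_self_in_orbit(1)[OF fin(1) p x0] unfolding C_def .
  define h where "h z = (q ^^ funpow_dist p x0 z) y" for z
  have key: "h ((p ^^ j) x0) = (q ^^ j) y" for j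
  proof -
    define j' where "j' = j mod k"
    have j'k: "j' < k" unfolding j'_def using Cfacts(1) by simp
    have pj: "(p ^^ j) x0 = (p ^^ j') x0" unfolding j'_def using funpow_mod_eq[OF Cfacts(2)] by simp
    have qj: "(q ^^ j) y = (q ^^ j') y" unfolding j'_def using funpow_mod_eq[OF Dfacts(1)] by simp
    define d where "d = funpow_dist p x0 ((p ^^ j') x0)"
    have "(p ^^ j') x0 \<in> Orbits.orbit p x0" using funpow_in_orbit[OF bij_self_in_orbit(1)[OF fin(1) p x0]] .
    then have dp: "(p ^^ d) x0 = (p ^^ j') x0" unfolding d_def by (rule funpow_dist_prop)
    have "d \<le> j'" unfolding d_def funpow_dist_def by (rule Least_le) simp
    then have "d = j'" using dp j'k Cfacts(4) unfolding inj_on_def by auto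
    then show ?thesis unfolding h_def pj qj d_def by simp
  qed
  define f where "f z = (if z \<in> C then h z else g z)" for z
  have gb: "bij_betw g (A - C) (B - D)" and gP: "g \<in> (A - C) \<rightarrow>\<^sub>E (B - D)"
    and gc: "\<forall>x\<in>A - C. q (g x) = g (p x)"
    using g unfolding conj_set_def C_def D_def by auto
  have hC: "h ` C = D"
  proof -
    have "h ` C = (\<lambda>j. h ((p ^^ j) x0)) ` {0..<k}" unfolding Cfacts(3) by (simp add: image_image)
    also have "\<dots> = D" unfolding Dfacts(2) key by simp
    finally show ?thesis .
  qed
  have finC: "finite C" using CA fin(1) finite_subset by blast
  have injh: "inj_on h C" by (rule eq_card_imp_inj_on[OF finC]) (simp add: hC kD[symmetric] k_def)
  have fbC: "bij_betw f C D" unfolding f_def using injh hC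
    by (simp add: bij_betw_def inj_on_def image_def) 
  have fbR: "bij_betw f (A - C) (B - D)" using gb
    by (rule bij_betw_cong[THEN iffD1, rotated]) (simp add: f_def)
  have fb: "bij_betw f A B"
  proof -
    have "bij_betw f (C \<union> (A - C)) (D \<union> (B - D))" by (rule bij_betw_combine[OF fbC fbR]) auto
    moreover have "C \<union> (A - C) = A" "D \<union> (B - D) = B" using CA DB by auto
    ultimately show ?thesis by simp
  qed
  have pR: "bij_betw p (A - C) (A - C)" unfolding C_def by (rule bij_diff_orbit[OF fin(1) p x0])
  have fP: "f \<in> A \<rightarrow>\<^sub>E B"
  proof (rule PiE_I)
    fix z assume "z \<in> A" then show "f z \<in> B" using fb by (auto dest: bij_betwE)
  next
    fix z assume "z \<notin> A"
    then have "z \<notin> C" "z \<notin> A - C" using CA by auto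
    then show "f z = undefined" unfolding f_def using gP by (auto simp: PiE_def extensional_def)
  qed
  have fc: "\<forall>x\<in>A. q (f x) = f (p x)"
  proof
    fix x assume xA: "x \<in> A"
    show "q (f x) = f (p x)"
    proof (cases "x \<in> C")
      case True
      then obtain j where j: "x = (p ^^ j) x0" using Cfacts(3) by auto
      have "p x = (p ^^ Suc j) x0" using j by simp
      moreover have "p x \<in> C" using True unfolding C_def by (auto intro: Orbits.orbit.step)
      ultimately have "f (p x) = (q ^^ Suc j) y" unfolding f_def using key[of "Suc j"] by simp
      moreover have "f x = (q ^^ j) y" unfolding f_def using True key j by simp
      ultimately show ?thesis by simp
    next
      case False
      then have "x \<in> A - C" using xA by simp
      moreover then have "p x \<in> A - C" using pR by (auto dest: bij_betwE)
      ultimately show ?thesis unfolding f_def using gc by auto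
    qed
  qed
  have fin_conj: "f \<in> conj_set p A q B" unfolding conj_set_def using fP fb fc by auto
  have "f x0 = y" unfolding f_def using x0C key[of 0] by simp
  moreover have "restrict f (A - C) = g"
  proof
    fix z show "restrict f (A - C) z = g z"
      using gP unfolding f_def by (auto simp: PiE_def extensional_def)
  qed
  ultimately show ?thesis using fin_conj unfolding C_def by blast
qed

lemma conj_rec:
  assumes fin: "finite A" "finite B" and p: "bij_betw p A A" and q: "bij_betw q B B" and x0: "x0 \<in> A"
  shows "card (conj_set p A q B) =
    (\<Sum>y\<in>{y\<in>B. card (Orbits.orbit q y) = card (Orbits.orbit p x0)}. card (conj_set p (A - Orbits.orbit p x0) q (B - Orbits.orbit q y)))"
proof -
  let ?C = "Orbits.orbit p x0"
  let ?Y = "{y\<in>B. card (Orbits.orbit q y) = card ?C}"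
  let ?S = "Sigma ?Y (\<lambda>y. conj_set p (A - ?C) q (B - Orbits.orbit q y))"
  define \<Psi> where "\<Psi> f = (f x0, restrict f (A - ?C))" for f :: "'a \<Rightarrow> 'b"
  have "bij_betw \<Psi> (conj_set p A q B) ?S"
  proof (rule bij_betw_imageI)
    show "inj_on \<Psi> (conj_set p A q B)"
    proof (rule inj_onI)
      fix f1 f2 assume "f1 \<in> conj_set p A q B" "f2 \<in> conj_set p A q B" "\<Psi> f1 = \<Psi> f2"
      then show "f1 = f2" using conj_inj[OF fin p x0] unfolding \<Psi>_def by auto
    qed
    show "\<Psi> ` conj_set p A q B = ?S"
    proof (intro Set.set_eqI iffI)
      fix u assume "u \<in> \<Psi> ` conj_set p A q B"
      then obtain f where f: "f \<in> conj_set p A q B" "u = \<Psi> f" by auto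
      show "u \<in> ?S" using conj_forward[OF fin p q x0 f(1)] f(2) unfolding \<Psi>_def by auto
    next
      fix u assume "u \<in> ?S"
      then obtain y g where u: "u = (y, g)" "y \<in> B" "card (Orbits.orbit q y) = card ?C"
        "g \<in> conj_set p (A - ?C) q (B - Orbits.orbit q y)" by auto
      obtain f where "f \<in> conj_set p A q B" "f x0 = y" "restrict f (A - ?C) = g"
        using conj_extend[OF fin p q x0 u(2,3,4)] by blast
      then show "u \<in> \<Psi> ` conj_set p A q B" unfolding \<Psi>_def u(1) by force
    qed
  qed
  then have "card (conj_set p A q B) = card ?S" by (rule bij_betw_same_card)
  also have "\<dots> = (\<Sum>y\<in>?Y. card (conj_set p (A - ?C) q (B - Orbits.orbit q y)))"
    by (rule card_SigmaI) (use fin in \<open>auto intro: finite_conj_set\<close>)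
  finally show ?thesis .
qed

definition cformula :: "('a \<Rightarrow> 'a) \<Rightarrow> 'a set \<Rightarrow> ('b \<Rightarrow> 'b) \<Rightarrow> 'b set \<Rightarrow> nat \<Rightarrow> real" where
  "cformula p A q B N = (\<Prod>i\<in>{1..N}. real i ^ cyc_count p A i * falling (cyc_count q B i) (cyc_count p A i))"

lemma falling_step:
  assumes "a \<ge> 1" shows "falling b a = real b * falling (b - 1) (a - 1)"
proof -
  obtain a' where a: "a = Suc a'" using assms by (cases a) auto
  show ?thesis
  proof (cases "b = 0")
    case True
    have "falling b a = (\<Prod>k<Suc a'. real b - real k)" by (simp add: falling_def a)
    also have "\<dots> = (real b - real 0) * (\<Prod>k<a'. real b - real (Suc k))" by (rule prod.lessThan_Suc_shift)
    finally show ?thesis using True by simp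
  next
    case False
    have "falling b a = (\<Prod>k<Suc a'. real b - real k)" by (simp add: falling_def a)
    also have "\<dots> = (real b - real 0) * (\<Prod>k<a'. real b - real (Suc k))" by (rule prod.lessThan_Suc_shift)
    also have "(\<Prod>k<a'. real b - real (Suc k)) = falling (b - 1) (a - 1)"
      unfolding falling_def a using False by (intro prod.cong) (auto simp: of_nat_diff)
    finally show ?thesis by simp
  qed
qed

lemma cyc_count_empty: "cyc_count p {} i = 0"
  unfolding cyc_count_def by simp

lemma count_conj:
  assumes "finite A" "finite B" "bij_betw p A A" "bij_betw q B B" "card A = card B" "card A \<le> N"
  shows "real (card (conj_set p A q B)) = cformula p A q B N"
  using assms
proof (induction "card A" arbitrary: A B rule: less_induct)
  case less
  show ?case
  proof (cases "A = {}")
    case True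
    then have B: "B = {}" using less by auto
    have "conj_set p A q B = {\<lambda>x. undefined}" unfolding conj_set_def True B by (auto simp: bij_betw_def)
    moreover have "cformula p A q B N = 1" unfolding cformula_def True B cyc_count_empty falling_def by simp
    ultimately show ?thesis by simp
  next
    case False
    then obtain x0 where x0: "x0 \<in> A" by auto
    note fin = less.prems(1,2) and p = less.prems(3) and q = less.prems(4)
    define C where "C = Orbits.orbit p x0"
    define k where "k = card C"
    define a where "a i = cyc_count p A i" for i
    define b where "b i = cyc_count q B i" for i
    define Y where "Y = {y\<in>B. card (Orbits.orbit q y) = k}"
    define F' where "F' = (\<Prod>i\<in>{1..N}. real i ^ (a i - (if i = k then 1 else 0)) *
        falling (b i - (if i = k then 1 else 0)) (a i - (if i = k then 1 else 0)))"
    have k0: "0 < k" using orbit_facts(1)[OF fin(1) p x0] unfolding k_def C_def .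
    have CA: "C \<subseteq> A" using bij_self_in_orbit(2)[OF fin(1) p x0] unfolding C_def .
    have kA: "k \<le> card A" unfolding k_def using card_mono[OF fin(1) CA] .
    have ak: "a k \<ge> 1" using cyc_diff(2)[OF fin(1) p x0] unfolding a_def k_def C_def .
    have cardY: "card Y = k * b k" unfolding Y_def b_def by (rule card_k_points[OF fin(2) q])
    have each: "real (card (conj_set p (A - C) q (B - Orbits.orbit q y))) = F'" if y: "y \<in> Y" for y
    proof -
      have yB: "y \<in> B" and yk: "card (Orbits.orbit q y) = k" using y unfolding Y_def by auto
      have DB: "Orbits.orbit q y \<subseteq> B" using bij_self_in_orbit(2)[OF fin(2) q yB] .
      have finC: "finite C" using CA fin(1) finite_subset by blast
      have finD: "finite (Orbits.orbit q y)" using DB fin(2) finite_subset by blast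
      have cAC: "card (A - C) = card A - k" unfolding k_def by (rule card_Diff_subset[OF finC CA])
      have cBD: "card (B - Orbits.orbit q y) = card B - k" using card_Diff_subset[OF finD DB] yk by simp
      have "real (card (conj_set p (A - C) q (B - Orbits.orbit q y))) = cformula p (A - C) q (B - Orbits.orbit q y) N"
      proof (rule less.hyps)
        show "card (A - C) < card A" using cAC k0 kA by simp
        show "finite (A - C)" using fin by simp
        show "finite (B - Orbits.orbit q y)" using fin by simp
        show "bij_betw p (A - C) (A - C)" unfolding C_def by (rule bij_diff_orbit[OF fin(1) p x0])
        show "bij_betw q (B - Orbits.orbit q y) (B - Orbits.orbit q y)" by (rule bij_diff_orbit[OF fin(2) q yB])
        show "card (A - C) = card (B - Orbits.orbit q y)" using cAC cBD less.prems(5) by simp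
        show "card (A - C) \<le> N" using cAC less.prems(6) by simp
      qed
      also have "\<dots> = F'" unfolding cformula_def F'_def a_def b_def C_def
        cyc_diff(1)[OF fin(1) p x0] cyc_diff(1)[OF fin(2) q yB] yk k_def[unfolded C_def] ..
      finally show ?thesis .
    qed
    have "real (card (conj_set p A q B)) = (\<Sum>y\<in>Y. real (card (conj_set p (A - C) q (B - Orbits.orbit q y))))"
      using conj_rec[OF fin p q x0] unfolding Y_def k_def C_def by simp
    also have "\<dots> = (\<Sum>y\<in>Y. F')" using each by (rule sum.cong[OF refl])
    also have "\<dots> = real k * real (b k) * F'" using cardY by simp
    also have "\<dots> = cformula p A q B N"
    proof -
      have kN: "k \<in> {1..N}" using k0 kA less.prems(6) by simp
      have F'eq: "F' = (real k ^ (a k - 1) * falling (b k - 1) (a k - 1)) *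
          (\<Prod>i\<in>{1..N} - {k}. real i ^ a i * falling (b i) (a i))"
        unfolding F'_def by (subst prod.remove[OF _ kN]) auto
      have Feq: "cformula p A q B N = (real k ^ a k * falling (b k) (a k)) *
          (\<Prod>i\<in>{1..N} - {k}. real i ^ a i * falling (b i) (a i))"
        unfolding cformula_def a_def[symmetric] b_def[symmetric] by (subst prod.remove[OF _ kN]) auto
      have pw: "real k ^ a k = real k * real k ^ (a k - 1)" using ak by (cases "a k") auto
      show ?thesis unfolding F'eq Feq pw falling_step[OF ak, of "b k"] by simp
    qed
    finally show ?thesis .
  qed
qed



abbreviation AA :: "nat \<Rightarrow> (nat \<times> nat) set" where "AA n \<equiv> {1..n} \<times> {1..2::nat}"
abbreviation Rw :: "nat \<Rightarrow> (nat \<times> nat) set" where "Rw i \<equiv> {i} \<times> {1..2::nat}"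

lemma Rw_inj: assumes "Rw i = Rw i'" shows "i = i'"
proof -
  have "(i,1) \<in> Rw i" by simp
  then have "(i,1) \<in> Rw i'" by (simp only: assms)
  then show ?thesis by simp
qed

lemma wreath_char:
  "\<pi> \<in> wreath n \<longleftrightarrow> \<pi> permutes AA n \<and> (\<forall>i\<in>{1..n}. \<exists>i'\<in>{1..n}. \<pi> ` Rw i = Rw i')"
proof
  assume "\<pi> \<in> wreath n"
  then obtain \<tau> \<sigma> where t: "\<tau> permutes {1..n}" and s: "\<forall>i\<in>{1..n}. \<sigma> i permutes {1..2}"
    and pdef: "\<pi> = (\<lambda>(i,j). if (i,j) \<in> AA n then (\<tau> i, \<sigma> i j) else (i,j))"
    unfolding wreath_def by blast
  have pv: "\<And>i j. i \<in> {1..n} \<Longrightarrow> j \<in> {1..2} \<Longrightarrow> \<pi> (i,j) = (\<tau> i, \<sigma> i j)" unfolding pdef by simp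
  have pout: "\<pi> x = x" if "x \<notin> AA n" for x
  proof -
    obtain a b where x: "x = (a,b)" by (cases x)
    show ?thesis using that unfolding pdef x by (simp only: prod.case if_False)
  qed
  have rows: "\<pi> ` Rw i = Rw (\<tau> i)" if i: "i \<in> {1..n}" for i
  proof -
    have "Rw i = Pair i ` {1..2}" by auto
    then have "\<pi> ` Rw i = (\<lambda>j. \<pi> (i,j)) ` {1..2}" by (simp add: image_image)
    also have "\<dots> = (\<lambda>j. (\<tau> i, \<sigma> i j)) ` {1..2}" using pv[OF i] by (intro image_cong) auto
    also have "\<dots> = Pair (\<tau> i) ` (\<sigma> i ` {1..2})" by (simp add: image_image)
    also have "\<dots> = Rw (\<tau> i)" using permutes_image[OF s[rule_format, OF i]] by auto
    finally show ?thesis .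
  qed
  have into: "\<pi> ` AA n \<subseteq> AA n"
  proof
    fix y assume "y \<in> \<pi> ` AA n"
    then obtain i j where ij: "i \<in> {1..n}" "j \<in> {1..2::nat}" "y = \<pi> (i,j)" by auto
    then show "y \<in> AA n" using pv[OF ij(1,2)] permutes_in_image[OF t, of i]
      permutes_in_image[OF s[rule_format, OF ij(1)], of j] by auto
  qed
  have inj: "inj_on \<pi> (AA n)"
  proof (rule inj_onI)
    fix x y assume xy: "x \<in> AA n" "y \<in> AA n" "\<pi> x = \<pi> y"
    obtain i j i' j' where xy': "x = (i,j)" "y = (i',j')" by (cases x, cases y) auto
    have "\<tau> i = \<tau> i'" "\<sigma> i j = \<sigma> i' j'" using xy pv xy' by auto
    then have "i = i'" using permutes_inj[OF t] by (simp add: inj_eq)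
    then have "j = j'" using \<open>\<sigma> i j = \<sigma> i' j'\<close> permutes_inj[OF s[rule_format, of i]] xy xy'
      by (simp add: inj_eq)
    then show "x = y" using \<open>i = i'\<close> xy' by simp
  qed
  have "\<pi> ` AA n = AA n" by (rule endo_inj_surj[OF _ into inj]) simp
  then have "bij_betw \<pi> (AA n) (AA n)" using inj unfolding bij_betw_def by simp
  then have "\<pi> permutes AA n" by (rule bij_imp_permutes) (rule pout)
  moreover have "\<forall>i\<in>{1..n}. \<exists>i'\<in>{1..n}. \<pi> ` Rw i = Rw i'"
    using rows permutes_in_image[OF t] by blast
  ultimately show "\<pi> permutes AA n \<and> (\<forall>i\<in>{1..n}. \<exists>i'\<in>{1..n}. \<pi> ` Rw i = Rw i')" by simp
next
  assume h: "\<pi> permutes AA n \<and> (\<forall>i\<in>{1..n}. \<exists>i'\<in>{1..n}. \<pi> ` Rw i = Rw i')"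
  then have pp: "\<pi> permutes AA n" and rw: "\<forall>i\<in>{1..n}. \<exists>i'\<in>{1..n}. \<pi> ` Rw i = Rw i'" by auto
  define \<tau> where "\<tau> i = (if i \<in> {1..n} then fst (\<pi> (i,1)) else i)" for i
  define \<sigma> where "\<sigma> i j = (if j \<in> {1..2::nat} then snd (\<pi> (i,j)) else j)" for i j
  have rowfst: "\<pi> ` Rw i = Rw (\<tau> i)" "\<tau> i \<in> {1..n}" if i: "i \<in> {1..n}" for i
  proof -
    obtain i' where i': "i' \<in> {1..n}" "\<pi> ` Rw i = Rw i'" using bspec[OF rw i] by blast
    have "\<pi> (i,1) \<in> \<pi> ` Rw i" by (rule imageI) simp
    then have "\<pi> (i,1) \<in> Rw i'" using i'(2) by metis
    then have "\<tau> i = i'" unfolding \<tau>_def using i by auto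
    then show "\<pi> ` Rw i = Rw (\<tau> i)" "\<tau> i \<in> {1..n}" using i' by auto
  qed
  have pv: "\<pi> (i,j) = (\<tau> i, \<sigma> i j)" if "i \<in> {1..n}" "j \<in> {1..2}" for i j
  proof -
    have "\<pi> (i,j) \<in> \<pi> ` Rw i" by (rule imageI) (use that(2) in simp)
    then have "\<pi> (i,j) \<in> Rw (\<tau> i)" using rowfst(1)[OF that(1)] by metis
    then show ?thesis unfolding \<sigma>_def using that(2) by (cases "\<pi> (i,j)") auto
  qed
  have injp: "inj \<pi>" by (rule permutes_inj[OF pp])
  have tp: "\<tau> permutes {1..n}"
  proof (rule bij_imp_permutes)
    have into: "\<tau> ` {1..n} \<subseteq> {1..n}" using rowfst(2) by auto
    have inj: "inj_on \<tau> {1..n}"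
    proof (rule inj_onI)
      fix i i' assume ii: "i \<in> {1..n}" "i' \<in> {1..n}" "\<tau> i = \<tau> i'"
      then have "\<pi> ` Rw i = \<pi> ` Rw i'" using rowfst(1) by simp
      then have "Rw i = Rw i'" using injp by (simp add: inj_image_eq_iff)
      then show "i = i'" by (rule Rw_inj)
    qed
    show "bij_betw \<tau> {1..n} {1..n}" unfolding bij_betw_def using endo_inj_surj[OF _ into inj] inj by simp
    show "\<And>x. x \<notin> {1..n} \<Longrightarrow> \<tau> x = x" unfolding \<tau>_def by (simp only: if_False)
  qed
  have sp: "\<sigma> i permutes {1..2}" if i: "i \<in> {1..n}" for i
  proof (rule bij_imp_permutes)
    have into: "\<sigma> i ` {1..2} \<subseteq> {1..2}"
    proof
      fix y assume "y \<in> \<sigma> i ` {1..2}"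
      then obtain j where j: "j \<in> {1..2::nat}" "y = \<sigma> i j" by auto
      have "\<pi> (i,j) \<in> \<pi> ` Rw i" by (rule imageI) (use j(1) in simp)
      then have "\<pi> (i,j) \<in> Rw (\<tau> i)" using rowfst(1)[OF i] by metis
      then show "y \<in> {1..2}" using j unfolding \<sigma>_def by auto
    qed
    have inj: "inj_on (\<sigma> i) {1..2}"
    proof (rule inj_onI)
      fix j j' assume jj: "j \<in> {1..2::nat}" "j' \<in> {1..2::nat}" "\<sigma> i j = \<sigma> i j'"
      then have "\<pi> (i,j) = \<pi> (i,j')" using pv[OF i] by simp
      then show "j = j'" using injp by (simp add: inj_eq)
    qed
    show "bij_betw (\<sigma> i) {1..2} {1..2}" unfolding bij_betw_def using endo_inj_surj[OF _ into inj] inj by simp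
    show "\<And>x. x \<notin> {1..2} \<Longrightarrow> \<sigma> i x = x" unfolding \<sigma>_def by (simp only: if_False)
  qed
  have "\<pi> = (\<lambda>(i,j). if (i,j) \<in> AA n then (\<tau> i, \<sigma> i j) else (i,j))"
  proof
    fix x show "\<pi> x = (\<lambda>(i,j). if (i,j) \<in> AA n then (\<tau> i, \<sigma> i j) else (i,j)) x"
      using pv permutes_not_in[OF pp] by (cases x) auto
  qed
  then show "\<pi> \<in> wreath n" unfolding wreath_def using tp sp by blast
qed


definition Phi :: "nat \<Rightarrow> (nat \<times> nat \<Rightarrow> nat) \<Rightarrow> nat set set" where
  "Phi n f = (\<lambda>i. f ` Rw i) ` {1..n}"

abbreviation FF :: "nat \<Rightarrow> (nat \<times> nat \<Rightarrow> nat) set" where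
  "FF n \<equiv> {f \<in> AA n \<rightarrow>\<^sub>E {1..2*n}. bij_betw f (AA n) {1..2*n}}"

lemma Rw_sub: "i \<in> {1..n} \<Longrightarrow> Rw i \<subseteq> AA n" by auto

lemma wreath_rows:
  assumes "\<pi> \<in> wreath n" shows "(\<lambda>i. \<pi> ` Rw i) ` {1..n} = Rw ` {1..n}"
proof -
  have pp: "\<pi> permutes AA n" and rw: "\<forall>i\<in>{1..n}. \<exists>i'\<in>{1..n}. \<pi> ` Rw i = Rw i'"
    using assms unfolding wreath_char by auto
  show ?thesis
  proof
    show "(\<lambda>i. \<pi> ` Rw i) ` {1..n} \<subseteq> Rw ` {1..n}" using rw by blast
    show "Rw ` {1..n} \<subseteq> (\<lambda>i. \<pi> ` Rw i) ` {1..n}"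
    proof
      fix S assume "S \<in> Rw ` {1..n}"
      then obtain i' where i': "i' \<in> {1..n}" "S = Rw i'" by auto
      have "(i',1) \<in> \<pi> ` AA n" using permutes_image[OF pp] i'(1) by simp
      then obtain i j where ij: "i \<in> {1..n}" "j \<in> {1..2::nat}" "\<pi> (i,j) = (i',1)" by auto
      obtain i'' where i'': "i'' \<in> {1..n}" "\<pi> ` Rw i = Rw i''" using bspec[OF rw ij(1)] by blast
      have "\<pi> (i,j) \<in> \<pi> ` Rw i" by (rule imageI) (use ij(2) in simp)
      then have "(i',1) \<in> Rw i''" using i''(2) ij(3) by metis
      then have "i'' = i'" by simp
      then have "S = \<pi> ` Rw i" using i'' i' by simp
      then show "S \<in> (\<lambda>i. \<pi> ` Rw i) ` {1..n}" by (rule image_eqI[OF _ ij(1)])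
    qed
  qed
qed

lemma Phi_comp:
  assumes "\<pi> \<in> wreath n" "\<forall>x\<in>AA n. f' x = f (\<pi> x)"
  shows "Phi n f' = Phi n f"
proof -
  have "Phi n f' = (\<lambda>i. f ` (\<pi> ` Rw i)) ` {1..n}" unfolding Phi_def
  proof (rule image_cong[OF refl])
    fix i assume i: "i \<in> {1..n}"
    have "f' ` Rw i = (\<lambda>x. f (\<pi> x)) ` Rw i" using assms(2) Rw_sub[OF i] by (intro image_cong) auto
    then show "f' ` Rw i = f ` \<pi> ` Rw i" by (simp add: image_image)
  qed
  also have "\<dots> = (\<lambda>S. f ` S) ` ((\<lambda>i. \<pi> ` Rw i) ` {1..n})" by (simp add: image_image)
  also have "\<dots> = Phi n f" unfolding wreath_rows[OF assms(1)] Phi_def by (simp add: image_image)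
  finally show ?thesis .
qed

lemma Phi_eq_imp:
  assumes f1: "f1 \<in> FF n" and f2: "f2 \<in> FF n" and eq: "Phi n f1 = Phi n f2"
  shows "\<exists>\<pi>\<in>wreath n. \<forall>x\<in>AA n. f2 x = f1 (\<pi> x)"
proof -
  have b1: "bij_betw f1 (AA n) {1..2*n}" and b2: "bij_betw f2 (AA n) {1..2*n}" using f1 f2 by auto
  define \<pi> where "\<pi> x = (if x \<in> AA n then inv_into (AA n) f1 (f2 x) else x)" for x
  have "bij_betw (inv_into (AA n) f1 \<circ> f2) (AA n) (AA n)"
    by (rule bij_betw_trans[OF b2 bij_betw_inv_into[OF b1]])
  then have "bij_betw \<pi> (AA n) (AA n)"
    by (rule bij_betw_cong[THEN iffD1, rotated]) (simp add: \<pi>_def)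
  then have pp: "\<pi> permutes AA n" by (rule bij_imp_permutes) (simp add: \<pi>_def)
  have inj1: "inj_on f1 (AA n)" using b1 unfolding bij_betw_def by simp
  have rows: "\<forall>i\<in>{1..n}. \<exists>i'\<in>{1..n}. \<pi> ` Rw i = Rw i'"
  proof
    fix i assume i: "i \<in> {1..n}"
    have "f2 ` Rw i \<in> Phi n f2" unfolding Phi_def by (rule image_eqI[OF refl i])
    then have "f2 ` Rw i \<in> Phi n f1" using eq by simp
    then obtain i' where i': "i' \<in> {1..n}" "f2 ` Rw i = f1 ` Rw i'" unfolding Phi_def by auto
    have "\<pi> ` Rw i = (\<lambda>x. inv_into (AA n) f1 (f2 x)) ` Rw i"
      using Rw_sub[OF i] unfolding \<pi>_def by (intro image_cong) auto
    also have "\<dots> = inv_into (AA n) f1 ` f2 ` Rw i" by (simp add: image_image)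
    also have "\<dots> = Rw i'" unfolding i'(2) by (rule inv_into_image_cancel[OF inj1 Rw_sub[OF i'(1)]])
    finally show "\<exists>i'\<in>{1..n}. \<pi> ` Rw i = Rw i'" using i'(1) by blast
  qed
  have "\<pi> \<in> wreath n" unfolding wreath_char using pp rows by simp
  moreover have "\<forall>x\<in>AA n. f2 x = f1 (\<pi> x)"
  proof
    fix x assume x: "x \<in> AA n"
    have "f2 x \<in> f1 ` AA n" using b1 b2 x unfolding bij_betw_def by auto
    then show "f2 x = f1 (\<pi> x)" unfolding \<pi>_def using x by (simp add: f_inv_into_f)
  qed
  ultimately show ?thesis by blast
qed

lemma card_Rw: "card (Rw i) = 2" by simp

lemma Phi_chord:
  assumes f: "f \<in> FF n" shows "chord_diagram n (Phi n f)"
  unfolding chord_diagram_def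
proof (intro conjI ballI)
  have b: "bij_betw f (AA n) {1..2*n}" using f by auto
  have inj: "inj_on f (AA n)" using b unfolding bij_betw_def by simp
  fix e assume "e \<in> Phi n f"
  then obtain i where i: "i \<in> {1..n}" "e = f ` Rw i" unfolding Phi_def by auto
  have "f ` Rw i \<subseteq> f ` AA n" by (rule image_mono[OF Rw_sub[OF i(1)]])
  then show "e \<subseteq> {1..2*n}" using i(2) bij_betw_imp_surj_on[OF b] by simp
  show "card e = 2" using i card_image[OF inj_on_subset[OF inj Rw_sub[OF i(1)]]] card_Rw by simp
next
  have b: "bij_betw f (AA n) {1..2*n}" using f by auto
  have inj: "inj_on f (AA n)" using b unfolding bij_betw_def by simp
  fix x assume x: "x \<in> {1..2*n}"
  then have "x \<in> f ` AA n" using bij_betw_imp_surj_on[OF b] by simp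
  then obtain a where a: "a \<in> AA n" "f a = x" by (rule imageE) (rule that, simp_all)
  obtain i j where ij: "a = (i,j)" by (cases a)
  have i: "i \<in> {1..n}" and j: "j \<in> {1..2}" using a(1) ij by auto
  show "\<exists>!e. e \<in> Phi n f \<and> x \<in> e"
  proof (rule ex1I[of _ "f ` Rw i"])
    have "f ` Rw i \<in> Phi n f" unfolding Phi_def by (rule image_eqI[OF refl i])
    moreover have "x \<in> f ` Rw i" using a(2) ij j by (intro image_eqI[of x f "(i,j)"]) auto
    ultimately show "f ` Rw i \<in> Phi n f \<and> x \<in> f ` Rw i" by simp
  next
    fix e assume e: "e \<in> Phi n f \<and> x \<in> e"
    then obtain i' where i': "i' \<in> {1..n}" "e = f ` Rw i'" unfolding Phi_def by auto
    then obtain j' where j': "j' \<in> {1..2::nat}" "x = f (i',j')" using e by auto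
    have "f (i',j') = f (i,j)" using a ij j' by simp
    moreover have "(i',j') \<in> AA n" "(i,j) \<in> AA n" using i' j' i j by auto
    ultimately have "(i',j') = (i,j)" using inj_onD[OF inj] by blast
    then show "e = f ` Rw i" using i' by simp
  qed
qed

lemma act_Phi:
  assumes g: "g permutes {1..2*n}" and f: "f \<in> FF n"
  shows "restrict (g \<circ> f) (AA n) \<in> FF n"
    and "Phi n (restrict (g \<circ> f) (AA n)) = (\<lambda>e. g ` e) ` Phi n f"
proof -
  have b: "bij_betw f (AA n) {1..2*n}" using f by auto
  have bg: "bij_betw (g \<circ> f) (AA n) {1..2*n}" by (rule bij_betw_trans[OF b permutes_imp_bij[OF g]])
  show "restrict (g \<circ> f) (AA n) \<in> FF n"
  proof (intro CollectI conjI)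
    show "restrict (g \<circ> f) (AA n) \<in> AA n \<rightarrow>\<^sub>E {1..2*n}" using bg unfolding bij_betw_def by auto
    show "bij_betw (restrict (g \<circ> f) (AA n)) (AA n) {1..2*n}" using bg
      by (rule bij_betw_cong[THEN iffD1, rotated]) simp
  qed
  have "Phi n (restrict (g \<circ> f) (AA n)) = (\<lambda>i. g ` f ` Rw i) ` {1..n}" unfolding Phi_def
  proof (rule image_cong[OF refl])
    fix i assume i: "i \<in> {1..n}"
    have "restrict (g \<circ> f) (AA n) ` Rw i = (\<lambda>x. g (f x)) ` Rw i" using Rw_sub[OF i] by (intro image_cong) auto
    then show "restrict (g \<circ> f) (AA n) ` Rw i = g ` f ` Rw i" by (simp add: image_image)
  qed
  also have "\<dots> = (\<lambda>e. g ` e) ` Phi n f" unfolding Phi_def by (simp add: image_image)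
  finally show "Phi n (restrict (g \<circ> f) (AA n)) = (\<lambda>e. g ` e) ` Phi n f" .
qed

lemma Phi_surj:
  assumes M: "chord_diagram n M"
  shows "\<exists>f\<in>FF n. Phi n f = M"
proof -
  let ?B = "{1..2*n}"
  have sub: "\<And>e. e \<in> M \<Longrightarrow> e \<subseteq> ?B" and c2: "\<And>e. e \<in> M \<Longrightarrow> card e = 2"
    and cov: "\<And>x. x \<in> ?B \<Longrightarrow> \<exists>!e. e \<in> M \<and> x \<in> e" using M unfolding chord_diagram_def by auto
  have finM: "finite M" by (rule finite_subset[of _ "Pow ?B"]) (use sub in auto)
  have fine: "\<And>e. e \<in> M \<Longrightarrow> finite e" using c2 by (metis card.infinite zero_neq_numeral)
  have U: "\<Union>M = ?B"
  proof
    show "\<Union>M \<subseteq> ?B" using sub by blast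
    show "?B \<subseteq> \<Union>M"
    proof
      fix x assume "x \<in> ?B"
      then obtain e where "e \<in> M" "x \<in> e" using cov by blast
      then show "x \<in> \<Union>M" by blast
    qed
  qed
  have disj: "pairwise disjnt M"
  proof (rule pairwiseI)
    fix e1 e2 assume h: "e1 \<in> M" "e2 \<in> M" "e1 \<noteq> e2"
    show "disjnt e1 e2" unfolding disjnt_def
    proof (rule ccontr)
      assume "e1 \<inter> e2 \<noteq> {}" then obtain x where x: "x \<in> e1" "x \<in> e2" by auto
      then have "x \<in> ?B" using subsetD[OF sub[OF h(1)] x(1)] by blast
      then show False using cov x h by blast
    qed
  qed
  have "card ?B = sum card M" unfolding U[symmetric] by (rule card_Union_disjoint[OF disj fine])
  also have "\<dots> = (\<Sum>e\<in>M. 2)" by (rule sum.cong) (auto simp: c2)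
  also have "\<dots> = 2 * card M" by simp
  finally have cM: "card M = n" by simp
  obtain h where h: "bij_betw h {1..n} M" using finite_same_card_bij[of "{1..n}" M] finM cM by auto
  define f where "f = restrict (\<lambda>(i,j). if j = 1 then Min (h i) else Max (h i)) (AA n)"
  have two: "h i = {Min (h i), Max (h i)}" "h i \<subseteq> ?B" if i: "i \<in> {1..n}" for i
  proof -
    have hM: "h i \<in> M" using h i by (auto dest: bij_betwE)
    then obtain a b where ab: "h i = {a,b}" "a \<noteq> b" using c2 card_2_iff by metis
    have "Min {a,b} = min a b" "Max {a,b} = max a b" by auto
    then show "h i = {Min (h i), Max (h i)}" unfolding ab by (auto simp: min_def max_def)
    show "h i \<subseteq> ?B" using sub hM by simp
  qed
  have rowimg: "f ` Rw i = h i" if i: "i \<in> {1..n}" for i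
  proof -
    have "Rw i = {(i,1),(i,2)}" by auto
    then have "f ` Rw i = {Min (h i), Max (h i)}" unfolding f_def using i by auto
    then show ?thesis using two(1)[OF i] by simp
  qed
  have PhiM: "Phi n f = M"
  proof -
    have "Phi n f = h ` {1..n}" unfolding Phi_def using rowimg by (rule image_cong[OF refl])
    then show ?thesis using bij_betw_imp_surj_on[OF h] by simp
  qed
  have AAU: "AA n = (\<Union>i\<in>{1..n}. Rw i)" by auto
  have img: "f ` AA n = ?B"
  proof -
    have "f ` AA n = (\<Union>i\<in>{1..n}. f ` Rw i)" by (subst AAU) (rule image_UN)
    also have "\<dots> = (\<Union>i\<in>{1..n}. h i)" using rowimg by simp
    also have "\<dots> = \<Union>M" using bij_betw_imp_surj_on[OF h] by auto
    finally show ?thesis using U by simp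
  qed
  have cardAA: "card (AA n) = 2*n" by (simp add: card_cartesian_product)
  have "card (f ` AA n) = card (AA n)" unfolding img cardAA by simp
  then have inj: "inj_on f (AA n)" by (rule eq_card_imp_inj_on[rotated]) simp
  have "f \<in> FF n"
  proof (intro CollectI conjI)
    have "\<forall>x\<in>AA n. f x \<in> ?B" using img by blast
    moreover have "f \<in> extensional (AA n)" unfolding f_def by simp
    ultimately show "f \<in> AA n \<rightarrow>\<^sub>E ?B" by (simp add: PiE_iff)
    show "bij_betw f (AA n) ?B" using inj img unfolding bij_betw_def by simp
  qed
  then show ?thesis using PhiM by blast
qed

lemma wreath_uniq:
  assumes inj: "inj_on f (AA n)" and p1: "\<pi>1 \<in> wreath n" and p2: "\<pi>2 \<in> wreath n"
    and eq: "\<forall>x\<in>AA n. f (\<pi>1 x) = f (\<pi>2 x)"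
  shows "\<pi>1 = \<pi>2"
proof
  have pp1: "\<pi>1 permutes AA n" and pp2: "\<pi>2 permutes AA n" using p1 p2 unfolding wreath_char by auto
  fix x show "\<pi>1 x = \<pi>2 x"
  proof (cases "x \<in> AA n")
    case True
    have a1: "\<pi>1 x \<in> AA n" using True permutes_in_image[OF pp1] by blast
    have a2: "\<pi>2 x \<in> AA n" using True permutes_in_image[OF pp2] by blast
    show ?thesis by (rule inj_onD[OF inj bspec[OF eq True] a1 a2])
  next
    case False
    then show ?thesis using permutes_not_in[OF pp1] permutes_not_in[OF pp2] by simp
  qed
qed

lemma card_stab:
  assumes g: "g permutes {1..2*n}" and f: "f \<in> FF n"
  shows "card {\<pi> \<in> wreath n. \<forall>x\<in>AA n. g (f x) = f (\<pi> x)} =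
    (if (\<lambda>e. g ` e) ` Phi n f = Phi n f then 1 else 0)"
proof -
  let ?f' = "restrict (g \<circ> f) (AA n)"
  have f'F: "?f' \<in> FF n" and Pf': "Phi n ?f' = (\<lambda>e. g ` e) ` Phi n f" using act_Phi[OF g f] by auto
  have inj: "inj_on f (AA n)" using f unfolding bij_betw_def by auto
  show ?thesis
  proof (cases "(\<lambda>e. g ` e) ` Phi n f = Phi n f")
    case True
    then have "Phi n f = Phi n ?f'" using Pf' by simp
    then obtain \<pi> where \<pi>: "\<pi> \<in> wreath n" "\<forall>x\<in>AA n. ?f' x = f (\<pi> x)" using Phi_eq_imp[OF f f'F] by blast
    have \<pi>': "\<forall>x\<in>AA n. g (f x) = f (\<pi> x)"
    proof
      fix x assume x: "x \<in> AA n"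
      have "?f' x = f (\<pi> x)" using \<pi>(2) x by blast
      then show "g (f x) = f (\<pi> x)" by (simp only: restrict_apply'[OF x] o_apply)
    qed
    have "{\<pi> \<in> wreath n. \<forall>x\<in>AA n. g (f x) = f (\<pi> x)} = {\<pi>}"
    proof (intro Set.set_eqI iffI)
      fix \<rho> assume "\<rho> \<in> {\<pi> \<in> wreath n. \<forall>x\<in>AA n. g (f x) = f (\<pi> x)}"
      then have r: "\<rho> \<in> wreath n" and r2: "\<forall>x\<in>AA n. g (f x) = f (\<rho> x)" by auto
      have "\<forall>x\<in>AA n. f (\<rho> x) = f (\<pi> x)"
      proof
        fix x assume x: "x \<in> AA n"
        show "f (\<rho> x) = f (\<pi> x)" using bspec[OF r2 x] bspec[OF \<pi>' x] by simp
      qed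
      then have "\<rho> = \<pi>" by (rule wreath_uniq[OF inj r \<pi>(1)])
      then show "\<rho> \<in> {\<pi>}" by simp
    next
      fix \<rho> assume "\<rho> \<in> {\<pi>}" then show "\<rho> \<in> {\<pi> \<in> wreath n. \<forall>x\<in>AA n. g (f x) = f (\<pi> x)}"
        using \<pi>(1) \<pi>' by blast
    qed
    then show ?thesis using True by simp
  next
    case False
    have E: "{\<pi> \<in> wreath n. \<forall>x\<in>AA n. g (f x) = f (\<pi> x)} = {}"
    proof (rule ccontr)
      assume "{\<pi> \<in> wreath n. \<forall>x\<in>AA n. g (f x) = f (\<pi> x)} \<noteq> {}"
      then obtain \<pi> where \<pi>: "\<pi> \<in> wreath n" "\<forall>x\<in>AA n. g (f x) = f (\<pi> x)" by auto
      have "\<forall>x\<in>AA n. ?f' x = f (\<pi> x)"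
      proof
        fix x assume x: "x \<in> AA n"
        show "?f' x = f (\<pi> x)" using bspec[OF \<pi>(2) x] by (simp only: restrict_apply'[OF x] o_apply)
      qed
      then have "Phi n ?f' = Phi n f" by (rule Phi_comp[OF \<pi>(1)])
      then show False using False Pf' by simp
    qed
    show ?thesis unfolding E using False by simp
  qed
qed

lemma fiber_card:
  assumes M: "chord_diagram n M"
  shows "card {f \<in> FF n. Phi n f = M} = card (wreath n)"
proof -
  obtain f0 where f0: "f0 \<in> FF n" "Phi n f0 = M" using Phi_surj[OF M] by blast
  have b0: "bij_betw f0 (AA n) {1..2*n}" using f0 by auto
  have inj0: "inj_on f0 (AA n)" using b0 unfolding bij_betw_def by auto
  define \<Psi> where "\<Psi> \<pi> = restrict (f0 \<circ> \<pi>) (AA n)" for \<pi>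
  have "bij_betw \<Psi> (wreath n) {f \<in> FF n. Phi n f = M}"
  proof (rule bij_betw_imageI)
    show "inj_on \<Psi> (wreath n)"
    proof (rule inj_onI)
      fix \<pi>1 \<pi>2 assume h: "\<pi>1 \<in> wreath n" "\<pi>2 \<in> wreath n" "\<Psi> \<pi>1 = \<Psi> \<pi>2"
      have "\<forall>x\<in>AA n. f0 (\<pi>1 x) = f0 (\<pi>2 x)"
      proof
        fix x assume x: "x \<in> AA n"
        show "f0 (\<pi>1 x) = f0 (\<pi>2 x)" using fun_cong[OF h(3), of x] x unfolding \<Psi>_def by simp
      qed
      then show "\<pi>1 = \<pi>2" by (rule wreath_uniq[OF inj0 h(1,2)])
    qed
    show "\<Psi> ` wreath n = {f \<in> FF n. Phi n f = M}"
    proof (intro Set.set_eqI iffI)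
      fix f assume "f \<in> \<Psi> ` wreath n"
      then obtain \<pi> where \<pi>: "\<pi> \<in> wreath n" "f = \<Psi> \<pi>" by auto
      have pp: "\<pi> permutes AA n" using \<pi>(1) unfolding wreath_char by auto
      have bb: "bij_betw (f0 \<circ> \<pi>) (AA n) {1..2*n}" by (rule bij_betw_trans[OF permutes_imp_bij[OF pp] b0])
      have "f \<in> FF n"
      proof (intro CollectI conjI)
        show "f \<in> AA n \<rightarrow>\<^sub>E {1..2*n}" using bb unfolding \<pi>(2) \<Psi>_def bij_betw_def by auto
        show "bij_betw f (AA n) {1..2*n}" unfolding \<pi>(2) \<Psi>_def using bb
          by (rule bij_betw_cong[THEN iffD1, rotated]) simp
      qed
      moreover have "Phi n f = M" unfolding f0(2)[symmetric] \<pi>(2) \<Psi>_def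
        by (rule Phi_comp[OF \<pi>(1)]) simp
      ultimately show "f \<in> {f \<in> FF n. Phi n f = M}" by simp
    next
      fix f assume f: "f \<in> {f \<in> FF n. Phi n f = M}"
      then have fF: "f \<in> FF n" and "Phi n f0 = Phi n f" using f0 by auto
      then obtain \<pi> where \<pi>: "\<pi> \<in> wreath n" "\<forall>x\<in>AA n. f x = f0 (\<pi> x)" using Phi_eq_imp[OF f0(1) fF] by blast
      have "f = \<Psi> \<pi>"
      proof
        fix x show "f x = \<Psi> \<pi> x"
        proof (cases "x \<in> AA n")
          case True
          then have "f x = f0 (\<pi> x)" using \<pi>(2) by blast
          then show ?thesis unfolding \<Psi>_def using True by simp
        next
          case False
          have "f x = undefined" using fF False by (intro PiE_arb[of f "AA n" "\<lambda>_. {1..2*n}"]) auto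
          then show ?thesis unfolding \<Psi>_def using False by simp
        qed
      qed
      then show "f \<in> \<Psi> ` wreath n" using \<pi>(1) by blast
    qed
  qed
  then show ?thesis by (simp add: bij_betw_same_card)
qed

lemma finite_wreath: "finite (wreath n)"
  by (rule finite_subset[of _ "{p. p permutes AA n}"]) (auto simp: wreath_char intro: finite_permutations)

lemma card_filter_sum: "finite S \<Longrightarrow> card {x \<in> S. P x} = (\<Sum>x\<in>S. if P x then 1 else 0)"
  by (simp add: sum.inter_filter[symmetric])

lemma sum_conj:
  assumes g: "g permutes {1..2*n}"
  shows "(\<Sum>\<pi>\<in>wreath n. card (conj_set \<pi> (AA n) g {1..2*n})) =
    card (wreath n) * card {M. chord_diagram n M \<and> (\<lambda>e. g ` e) ` M = M}"
proof -
  let ?X = "{M. chord_diagram n M}"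
  let ?P = "\<lambda>\<pi> f. \<forall>x\<in>AA n. g (f x) = f (\<pi> x)"
  have finF: "finite (FF n)" by (rule finite_subset[of _ "AA n \<rightarrow>\<^sub>E {1..2*n}"]) (auto intro: finite_PiE)
  have finX: "finite ?X"
    by (rule finite_subset[of _ "Pow (Pow {1..2*n})"]) (auto simp: chord_diagram_def)
  have "(\<Sum>\<pi>\<in>wreath n. card (conj_set \<pi> (AA n) g {1..2*n})) =
      (\<Sum>\<pi>\<in>wreath n. \<Sum>f\<in>FF n. if ?P \<pi> f then 1 else 0)"
  proof (rule sum.cong[OF refl])
    fix \<pi> assume "\<pi> \<in> wreath n"
    have "conj_set \<pi> (AA n) g {1..2*n} = {f \<in> FF n. ?P \<pi> f}" unfolding conj_set_def by auto
    then show "card (conj_set \<pi> (AA n) g {1..2*n}) = (\<Sum>f\<in>FF n. if ?P \<pi> f then 1 else 0)"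
      using card_filter_sum[OF finF] by simp
  qed
  also have "\<dots> = (\<Sum>f\<in>FF n. \<Sum>\<pi>\<in>wreath n. if ?P \<pi> f then 1 else 0)" by (rule sum.swap)
  also have "\<dots> = (\<Sum>f\<in>FF n. if (\<lambda>e. g ` e) ` Phi n f = Phi n f then 1 else 0)"
  proof (rule sum.cong[OF refl])
    fix f assume f: "f \<in> FF n"
    have "(\<Sum>\<pi>\<in>wreath n. if ?P \<pi> f then (1::nat) else 0) = card {\<pi> \<in> wreath n. ?P \<pi> f}"
      by (rule card_filter_sum[OF finite_wreath, symmetric])
    also have "\<dots> = (if (\<lambda>e. g ` e) ` Phi n f = Phi n f then (1::nat) else 0)" by (rule card_stab[OF g f])
    finally show "(\<Sum>\<pi>\<in>wreath n. if ?P \<pi> f then (1::nat) else 0) = (if (\<lambda>e. g ` e) ` Phi n f = Phi n f then (1::nat) else 0)" .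
  qed
  also have "\<dots> = (\<Sum>M\<in>?X. \<Sum>f\<in>{f. f \<in> FF n \<and> Phi n f = M}. if (\<lambda>e. g ` e) ` Phi n f = Phi n f then 1 else 0)"
  proof (rule sum.group[symmetric, OF finF finX])
    show "Phi n ` FF n \<subseteq> ?X"
    proof
      fix M assume "M \<in> Phi n ` FF n"
      then obtain f where f: "f \<in> FF n" "M = Phi n f" by blast
      show "M \<in> ?X" using Phi_chord[OF f(1)] f(2) by simp
    qed
  qed
  also have "\<dots> = (\<Sum>M\<in>?X. card (wreath n) * (if (\<lambda>e. g ` e) ` M = M then 1 else 0))"
  proof (rule sum.cong[OF refl])
    fix M assume M: "M \<in> ?X"
    have "(\<Sum>f\<in>{f. f \<in> FF n \<and> Phi n f = M}. if (\<lambda>e. g ` e) ` Phi n f = Phi n f then 1 else 0) =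
        (\<Sum>f\<in>{f. f \<in> FF n \<and> Phi n f = M}. if (\<lambda>e. g ` e) ` M = M then 1 else 0)"
      by (rule sum.cong) auto
    also have "\<dots> = card {f \<in> FF n. Phi n f = M} * (if (\<lambda>e. g ` e) ` M = M then 1 else 0)" by simp
    finally show "(\<Sum>f\<in>{f. f \<in> FF n \<and> Phi n f = M}. if (\<lambda>e. g ` e) ` Phi n f = Phi n f then 1 else 0) =
        card (wreath n) * (if (\<lambda>e. g ` e) ` M = M then 1 else 0)"
      using fiber_card[of n M] M by simp
  qed
  also have "\<dots> = card (wreath n) * (\<Sum>M\<in>?X. if (\<lambda>e. g ` e) ` M = M then 1 else 0)"
    by (simp add: sum_distrib_left)
  also have "(\<Sum>M\<in>?X. if (\<lambda>e. g ` e) ` M = M then 1 else 0) = card {M \<in> ?X. (\<lambda>e. g ` e) ` M = M}"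
    using card_filter_sum[OF finX] by simp
  finally show ?thesis by simp
qed



abbreviation act :: "(nat \<Rightarrow> nat) \<Rightarrow> nat set set \<Rightarrow> nat set set" where
  "act g M \<equiv> (\<lambda>e. g ` e) ` M"

lemma act_chord:
  assumes g: "g permutes {1..2*n}" and M: "chord_diagram n M"
  shows "chord_diagram n (act g M)"
  unfolding chord_diagram_def
proof (intro conjI ballI)
  fix e' assume "e' \<in> act g M"
  then obtain e where e: "e \<in> M" "e' = g ` e" by auto
  have "e \<subseteq> {1..2*n}" "card e = 2" using M e(1) unfolding chord_diagram_def by auto
  then show "e' \<subseteq> {1..2*n}" "card e' = 2" using e(2) permutes_image[OF g]
      card_image[OF inj_on_subset[OF permutes_inj[OF g], of e]] by auto
next
  fix x assume x: "x \<in> {1..2*n}"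
  let ?ig = "Hilbert_Choice.inv g"
  have ixB: "?ig x \<in> {1..2*n}" by (rule permutes_in_image[OF permutes_inv[OF g], THEN iffD2, OF x])
  then obtain e where e: "e \<in> M" "?ig x \<in> e" and eu: "\<And>e2. e2 \<in> M \<Longrightarrow> ?ig x \<in> e2 \<Longrightarrow> e2 = e"
    using M unfolding chord_diagram_def by metis
  have gix: "g (?ig x) = x" using permutes_inverses(1)[OF g] by simp
  show "\<exists>!e'. e' \<in> act g M \<and> x \<in> e'"
  proof (rule ex1I[of _ "g ` e"])
    show "g ` e \<in> act g M \<and> x \<in> g ` e" using e gix by (metis imageI)
  next
    fix e2 assume "e2 \<in> act g M \<and> x \<in> e2"
    then obtain e3 where e3: "e3 \<in> M" "e2 = g ` e3" "x \<in> g ` e3" by auto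
    then obtain z where z: "z \<in> e3" "x = g z" by auto
    have "?ig x = z" using z(2) permutes_inverses(2)[OF g] by simp
    then have "e3 = e" using eu e3(1) z(1) by simp
    then show "e2 = g ` e" using e3 by simp
  qed
qed

lemma burnside_G:
  assumes GG: "circuit_perm_group n G"
  shows "card ({M. chord_diagram n M} // diagram_equiv n G) * card G =
    (\<Sum>g\<in>G. card {M. chord_diagram n M \<and> act g M = M})"
proof -
  define X where "X = {M. chord_diagram n M}"
  define B where "B = {1..2*n}"
  have perm: "\<And>g. g \<in> G \<Longrightarrow> g permutes B" using GG unfolding circuit_perm_group_def B_def by auto
  have comp: "\<And>g h. g \<in> G \<Longrightarrow> h \<in> G \<Longrightarrow> g \<circ> h \<in> G" using GG unfolding circuit_perm_group_def by auto
  have invG: "\<And>g. g \<in> G \<Longrightarrow> Hilbert_Choice.inv g \<in> G" using GG unfolding circuit_perm_group_def by auto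
  have finG: "finite G" using GG unfolding circuit_perm_group_def by auto
  obtain g0 where g0: "g0 \<in> G" using GG unfolding circuit_perm_group_def by auto
  have idG: "id \<in> G" using comp[OF g0 invG[OF g0]] permutes_inv_o(1)[OF perm[OF g0]] by simp
  have actX: "\<And>g M. g \<in> G \<Longrightarrow> M \<in> X \<Longrightarrow> act g M \<in> X"
    unfolding X_def using act_chord perm unfolding B_def by auto
  have finX: "finite X"
  proof (rule finite_subset[of _ "Pow (Pow B)"])
    show "X \<subseteq> Pow (Pow B)" unfolding X_def B_def chord_diagram_def by auto
  qed (simp add: B_def)
  define G0 where "G0 = (\<lparr>carrier = G, mult = (\<lambda>g h. g \<circ> h), one = id\<rparr> :: (nat \<Rightarrow> nat) monoid)"
  define \<phi> where "\<phi> g = restrict (act g) X" for g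
  have grp: "group G0"
  proof (rule groupI)
    show "\<And>x y. x \<in> carrier G0 \<Longrightarrow> y \<in> carrier G0 \<Longrightarrow> x \<otimes>\<^bsub>G0\<^esub> y \<in> carrier G0"
      unfolding G0_def using comp by simp
    show "\<one>\<^bsub>G0\<^esub> \<in> carrier G0" unfolding G0_def using idG by simp
    show "\<And>x y z. x \<in> carrier G0 \<Longrightarrow> y \<in> carrier G0 \<Longrightarrow> z \<in> carrier G0 \<Longrightarrow>
      x \<otimes>\<^bsub>G0\<^esub> y \<otimes>\<^bsub>G0\<^esub> z = x \<otimes>\<^bsub>G0\<^esub> (y \<otimes>\<^bsub>G0\<^esub> z)"
      unfolding G0_def by (simp add: o_assoc)
    show "\<And>x. x \<in> carrier G0 \<Longrightarrow> \<one>\<^bsub>G0\<^esub> \<otimes>\<^bsub>G0\<^esub> x = x" unfolding G0_def by simp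
    show "\<And>x. x \<in> carrier G0 \<Longrightarrow> \<exists>y\<in>carrier G0. y \<otimes>\<^bsub>G0\<^esub> x = \<one>\<^bsub>G0\<^esub>"
      unfolding G0_def using invG permutes_inv_o(2)[OF perm] by force
  qed
  have phiBij: "\<phi> g \<in> Bij X" if g: "g \<in> G" for g
  proof -
    have "bij_betw (act g) X X"
    proof (rule bij_betw_byWitness[where f' = "act (Hilbert_Choice.inv g)"])
      show "\<forall>a\<in>X. act (Hilbert_Choice.inv g) (act g a) = a"
        using permutes_inverses[OF perm[OF g]] by (simp add: image_image)
      show "\<forall>a\<in>X. act g (act (Hilbert_Choice.inv g) a) = a"
        using permutes_inverses[OF perm[OF g]] by (simp add: image_image)
      show "act g ` X \<subseteq> X" using actX g by auto
      show "act (Hilbert_Choice.inv g) ` X \<subseteq> X" using actX invG g by auto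
    qed
    then show ?thesis unfolding Bij_def \<phi>_def
      by (simp add: bij_betw_cong[of X "restrict (act g) X" "act g"])
  qed
  have ga: "group_action G0 X \<phi>"
    unfolding group_action_def group_hom_def group_hom_axioms_def
  proof (intro conjI)
    show "group G0" by (rule grp)
    show "group (BijGroup X)" by (rule group_BijGroup)
    show "\<phi> \<in> hom G0 (BijGroup X)"
    proof (rule homI)
      show "\<And>x. x \<in> carrier G0 \<Longrightarrow> \<phi> x \<in> carrier (BijGroup X)"
        unfolding G0_def BijGroup_def using phiBij by simp
      fix g h assume gh: "g \<in> carrier G0" "h \<in> carrier G0"
      then have gh': "g \<in> G" "h \<in> G" unfolding G0_def by auto
      show "\<phi> (g \<otimes>\<^bsub>G0\<^esub> h) = \<phi> g \<otimes>\<^bsub>BijGroup X\<^esub> \<phi> h"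
        unfolding G0_def BijGroup_def using phiBij[OF gh'(1)] phiBij[OF gh'(2)]
        by (auto simp: \<phi>_def compose_def actX[OF gh'(2)] image_comp intro!: ext)
    qed
  qed
  have bs: "card (orbits G0 X \<phi>) * order G0 = (\<Sum>g\<in>carrier G0. card (invariants X \<phi> g))"
    using group_action.burnside[OF ga] finG finX unfolding G0_def by simp
  have orb: "orbits G0 X \<phi> = X // diagram_equiv n G"
  proof -
    have "\<And>M. M \<in> X \<Longrightarrow> Group_Action.orbit G0 \<phi> M = diagram_equiv n G `` {M}"
      unfolding Group_Action.orbit_def diagram_equiv_def G0_def \<phi>_def
      using actX unfolding X_def by auto
    then show ?thesis unfolding orbits_def quotient_def by auto
  qed
  have inv: "\<And>g. invariants X \<phi> g = {M. chord_diagram n M \<and> act g M = M}"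
    unfolding invariants_def \<phi>_def X_def by auto
  show ?thesis using bs unfolding orb inv by (simp add: order_def G0_def X_def)
qed



lemma formula_eq:
  "(if \<exists>i\<in>{1..N}. cyc_count p A i > cyc_count q B i then 0
    else (\<Prod>i\<in>{i\<in>{1..N}. cyc_count p A i > 0}.
      real i ^ cyc_count p A i * falling (cyc_count q B i) (cyc_count p A i))) = cformula p A q B N"
proof (cases "\<exists>i\<in>{1..N}. cyc_count p A i > cyc_count q B i")
  case True
  then obtain i where i: "i \<in> {1..N}" "cyc_count p A i > cyc_count q B i" by blast
  have "falling (cyc_count q B i) (cyc_count p A i) = 0"
    unfolding falling_def using i(2) by (intro prod_zero) (auto intro!: bexI[of _ "cyc_count q B i"])
  then have "cformula p A q B N = 0" unfolding cformula_def using i(1)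
    by (intro prod_zero) (auto intro!: bexI[of _ i])
  then show ?thesis using True by simp
next
  case False
  have "(\<Prod>i\<in>{i\<in>{1..N}. cyc_count p A i > 0}.
      real i ^ cyc_count p A i * falling (cyc_count q B i) (cyc_count p A i)) = cformula p A q B N"
    unfolding cformula_def by (rule prod.mono_neutral_left) (auto simp: falling_def)
  then show ?thesis using False by simp
qed

theorem theorem1:
  fixes n :: nat and G :: "(nat \<Rightarrow> nat) set"
  assumes "n \<ge> 1" and "circuit_perm_group n G"
  shows "real (card ({M. chord_diagram n M} // diagram_equiv n G)) =
    1 / (real (card (wreath n)) * real (card G)) *
    (\<Sum>\<pi>\<in>wreath n. \<Sum>\<eta>\<in>G.
       (if \<exists>i\<in>{1..2*n}. cyc_count \<pi> ({1..n} \<times> {1..2}) i > cyc_count \<eta> {1..2*n} i then 0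
        else (\<Prod>i\<in>{i\<in>{1..2*n}. cyc_count \<pi> ({1..n} \<times> {1..2}) i > 0}.
          real i ^ cyc_count \<pi> ({1..n} \<times> {1..2}) i *
          falling (cyc_count \<eta> {1..2*n} i) (cyc_count \<pi> ({1..n} \<times> {1..2}) i))))"
proof -
  let ?B = "{1..2*n}"
  let ?Q = "card ({M. chord_diagram n M} // diagram_equiv n G)"
  have GG: "circuit_perm_group n G" by (rule assms(2))
  have perm: "\<And>g. g \<in> G \<Longrightarrow> g permutes ?B" using GG unfolding circuit_perm_group_def by auto
  have finG: "finite G" and neG: "G \<noteq> {}" using GG unfolding circuit_perm_group_def by auto
  have cG: "card G > 0" using finG neG by (simp add: card_gt_0_iff)
  have idW: "id \<in> wreath n" unfolding wreath_char by (auto intro: permutes_id)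
  have cW: "card (wreath n) > 0" using finite_wreath idW by (auto simp: card_gt_0_iff)
  have cAA: "card (AA n) = 2 * n" by (simp add: card_cartesian_product)
  have term_eq: "(if \<exists>i\<in>{1..2*n}. cyc_count \<pi> (AA n) i > cyc_count \<eta> ?B i then 0
        else (\<Prod>i\<in>{i\<in>{1..2*n}. cyc_count \<pi> (AA n) i > 0}.
          real i ^ cyc_count \<pi> (AA n) i * falling (cyc_count \<eta> ?B i) (cyc_count \<pi> (AA n) i)))
      = real (card (conj_set \<pi> (AA n) \<eta> ?B))" if p: "\<pi> \<in> wreath n" and e: "\<eta> \<in> G" for \<pi> \<eta>
  proof -
    have pp: "\<pi> permutes AA n" using p unfolding wreath_char by auto
    have "real (card (conj_set \<pi> (AA n) \<eta> ?B)) = cformula \<pi> (AA n) \<eta> ?B (2*n)"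
    proof (rule count_conj)
      show "bij_betw \<pi> (AA n) (AA n)" by (rule permutes_imp_bij[OF pp])
      show "bij_betw \<eta> ?B ?B" by (rule permutes_imp_bij[OF perm[OF e]])
    qed (simp_all add: cAA)
    then show ?thesis unfolding formula_eq by simp
  qed
  have "(\<Sum>\<pi>\<in>wreath n. \<Sum>\<eta>\<in>G.
       (if \<exists>i\<in>{1..2*n}. cyc_count \<pi> (AA n) i > cyc_count \<eta> ?B i then 0
        else (\<Prod>i\<in>{i\<in>{1..2*n}. cyc_count \<pi> (AA n) i > 0}.
          real i ^ cyc_count \<pi> (AA n) i * falling (cyc_count \<eta> ?B i) (cyc_count \<pi> (AA n) i))))
     = (\<Sum>\<pi>\<in>wreath n. \<Sum>\<eta>\<in>G. real (card (conj_set \<pi> (AA n) \<eta> ?B)))"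
    using term_eq by (intro sum.cong refl) auto
  also have "\<dots> = (\<Sum>\<eta>\<in>G. \<Sum>\<pi>\<in>wreath n. real (card (conj_set \<pi> (AA n) \<eta> ?B)))" by (rule sum.swap)
  also have "\<dots> = (\<Sum>\<eta>\<in>G. real (card (wreath n)) * real (card {M. chord_diagram n M \<and> (\<lambda>e. \<eta> ` e) ` M = M}))"
  proof (rule sum.cong[OF refl])
    fix \<eta> assume e: "\<eta> \<in> G"
    have "(\<Sum>\<pi>\<in>wreath n. real (card (conj_set \<pi> (AA n) \<eta> ?B))) =
        real (\<Sum>\<pi>\<in>wreath n. card (conj_set \<pi> (AA n) \<eta> ?B))" by simp
    also have "\<dots> = real (card (wreath n) * card {M. chord_diagram n M \<and> (\<lambda>e. \<eta> ` e) ` M = M})"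
      using sum_conj[OF perm[OF e]] by simp
    finally show "(\<Sum>\<pi>\<in>wreath n. real (card (conj_set \<pi> (AA n) \<eta> ?B))) =
        real (card (wreath n)) * real (card {M. chord_diagram n M \<and> (\<lambda>e. \<eta> ` e) ` M = M})" by simp
  qed
  also have "\<dots> = real (card (wreath n)) * real (\<Sum>\<eta>\<in>G. card {M. chord_diagram n M \<and> (\<lambda>e. \<eta> ` e) ` M = M})"
    by (simp add: sum_distrib_left)
  also have "\<dots> = real (card (wreath n)) * real (?Q * card G)"
    by (simp only: burnside_G[OF GG])
  finally have S: "(\<Sum>\<pi>\<in>wreath n. \<Sum>\<eta>\<in>G.
       (if \<exists>i\<in>{1..2*n}. cyc_count \<pi> (AA n) i > cyc_count \<eta> ?B i then 0
        else (\<Prod>i\<in>{i\<in>{1..2*n}. cyc_count \<pi> (AA n) i > 0}.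
          real i ^ cyc_count \<pi> (AA n) i * falling (cyc_count \<eta> ?B i) (cyc_count \<pi> (AA n) i))))
     = real (card (wreath n)) * real (?Q * card G)" .
  show ?thesis unfolding S using cW cG by (simp add: field_simps)
qed

end
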